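(* Let $M$, $\alpha,\beta,\gamma$ satisfy the standing assumptions described in the context, let $T>0$ and $b$ be as fixed in the context, and for $\xi\in\mathbb{R}^n$ let $W(t,\xi)\in\mathbb{C}^2$ be any solution on $[T,\infty)$ of $$\partial_t W=\begin{pmatrix}-2b(t)& i|\xi|\\ i|\xi|&0\end{pmatrix}W .$$ Then there exist positive constants $N$ and $K_1$ such that, for all $(t,\xi)\in Z_H$ with $\xi\neq0$: if $\alpha>0$, then $K_1^{-1}|W(t_\xi,\xi)|\le|W(t,\xi)|\le K_1|W(t_\xi,\xi)|$; if $\alpha\le0$, then $K_1^{-1}|W(T,\xi)|\le|W(t,\xi)|\le K_1|W(T,\xi)|$.
   Context: Standing assumptions: $M:[0,\infty)\to\mathbb{R}$ continuous; $\alpha\le1$, $\beta<1$, $\gamma>0$ with $\gamma\ge\beta\ge(\alpha+1)/2$ if $\alpha\ne0$ and $\gamma\ge\beta>1/2$ if $\alpha=0$; $M$ satisfies: (M1) if $\alpha\ge 0$, $\int_0^t\big|\int_s^\infty\int_\sigma^\infty M(\tau)\,d\tau\,d\sigma\big|\,ds\lesssim(1+t)^{\alpha}$; if $\alpha\le 0$, $\int_t^\infty\big|\int_s^\infty\int_\sigma^\infty M(\tau)\,d\tau\,d\sigma\big|\,ds\lesssim(1+t)^{\alpha}$ (both when $\alpha=0$); (M2) $|M(t)|\lesssim(1+t)^{-2\beta}$; (M3) $\big|\int_t^\infty M\big|\lesssim(1+t)^{-\gamma}$, $\int_t^\infty\big(\int_s^\infty M\big)^2ds\lesssim(1+t)^{-\gamma}$,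 $\int_0^\infty\int_t^\infty\big(\int_s^\infty M\big)^2\,ds\,dt<\infty$; here $f\lesssim g$ means $f\le Cg$ with $C$ independent of $t$, and the moreover the condition $\sup_{t\ge0}(1+t)^\alpha\int_t^\infty\int_s^\infty(\int_\sigma^\infty M)^2\,d\sigma\,ds<\infty$ holds. Definition of $b$ and $T$: $q_1:=M$, $Q_k(t):=-\int_t^\infty q_k$, $q_k:=\sum_{j=1}^{k-1}Q_jQ_{k-j}$ ($k\ge 2$), $\phi(t):=-\int_t^\infty Q_2$; $T>0$ is chosen so that $|\int_t^\infty Q_1(s)\,ds|\le1$ and $\phi(t)\le 6^{-4}$ for all $t\ge T$, and $b(t):=\sum_{k\ge1}Q_k(t)$ on $[T,\infty)$ (this series converges, $b$ solves $b'+b^2+M=0$, and $|b(t)|\lesssim(1+t)^{-\gamma}$, $|b'(t)|\lesssim(1+t)^{-2\beta}$, $|\int_t^\infty b|$ bounded for $t\ge T$). Zones: for $N>0$, $Z_H:=\{(t,\xi)\in[T,\infty)\times\mathbb{R}^n:(1+t)^\alpha|\xi|\ge N\}$, and for $\alpha\ne0$, $\xi\ne0$, $t_\xi:=\max\{T,(N|\xi|^{-1})^{1/\alpha}-1\}$. *)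

theory Defs
  imports "HOL-Analysis.Analysis"
begin

definition tail_int :: "(real \<Rightarrow> real) \<Rightarrow> real \<Rightarrow> real" where
  "tail_int f t = Lim at_top (\<lambda>R. integral {t..R} f)"

definition tail_conv :: "(real \<Rightarrow> real) \<Rightarrow> real \<Rightarrow> bool" where
  "tail_conv f t \<longleftrightarrow> (\<exists>L. ((\<lambda>R. integral {t..R} f) \<longlongrightarrow> L) at_top)"

text \<open>q_k from a table G of Q_j: q_1 = M, q_k = sum_{j=1}^{k-1} Q_j Q_{k-j}.\<close>
definition qof :: "(real \<Rightarrow> real) \<Rightarrow> (nat \<Rightarrow> real \<Rightarrow> real) \<Rightarrow> nat \<Rightarrow> real \<Rightarrow> real" where
  "qof M G k t = (if k = 1 then M t else (\<Sum>j=1..k-1. G j t * G (k-j) t))"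

text \<open>Qtab M n k = Q_k for 1 <= k <= n.\<close>
primrec Qtab :: "(real \<Rightarrow> real) \<Rightarrow> nat \<Rightarrow> nat \<Rightarrow> real \<Rightarrow> real" where
  "Qtab M 0 = (\<lambda>k t. 0)"
| "Qtab M (Suc n) = (\<lambda>k t. if k = Suc n then - tail_int (qof M (Qtab M n) (Suc n)) t
                           else Qtab M n k t)"

text \<open>Q_k(t) = - int_t^infty q_k (k >= 1).\<close>
definition QQ :: "(real \<Rightarrow> real) \<Rightarrow> nat \<Rightarrow> real \<Rightarrow> real" where
  "QQ M k = Qtab M k k"

definition qq :: "(real \<Rightarrow> real) \<Rightarrow> nat \<Rightarrow> real \<Rightarrow> real" where
  "qq M k = qof M (QQ M) k"

definition phi :: "(real \<Rightarrow> real) \<Rightarrow> real \<Rightarrow> real" where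
  "phi M t = - tail_int (QQ M 2) t"

definition bfun :: "(real \<Rightarrow> real) \<Rightarrow> real \<Rightarrow> real" where
  "bfun M t = (\<Sum>k. QQ M (Suc k) t)"

definition Amat :: "real \<Rightarrow> real \<Rightarrow> complex^2^2" where
  "Amat c r = (\<chi> i j. if i = 1 \<and> j = 1 then complex_of_real (-2 * c)
                 else if i = 1 \<and> j = 2 then \<i> * complex_of_real r
                 else if i = 2 \<and> j = 1 then \<i> * complex_of_real r
                 else 0)"

definition ZH :: "real \<Rightarrow> real \<Rightarrow> real \<Rightarrow> (real \<times> (real^'n)) set" where
  "ZH T \<alpha> N = {(t, \<xi>). t \<ge> T \<and> (1 + t) powr \<alpha> * norm \<xi> \<ge> N}"

definition t_xi :: "real \<Rightarrow> real \<Rightarrow> real \<Rightarrow> real^'n \<Rightarrow> real" where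
  "t_xi T \<alpha> N \<xi> = max T ((N / norm \<xi>) powr (1 / \<alpha>) - 1)"

end

theory Submission
  imports Defs
begin

lemma tail_lim: assumes "((\<lambda>R. integral {a..R} f) \<longlongrightarrow> L) at_top"
  shows "tail_int f a = L" "tail_conv f a"
  using assms unfolding tail_int_def tail_conv_def by (auto intro: tendsto_Lim)

lemma tail_split:
  fixes f :: "real \<Rightarrow> real"
  assumes cont: "continuous_on {a..} f" and conv: "tail_conv f a" and at: "a \<le> t"
  shows "tail_conv f t" "tail_int f t = tail_int f a - integral {a..t} f"
proof -
  obtain L where L: "((\<lambda>R. integral {a..R} f) \<longlongrightarrow> L) at_top"
    using conv unfolding tail_conv_def by blast
  have La: "tail_int f a = L" using tail_lim(1)[OF L] .
  have ev: "eventually (\<lambda>R. integral {a..R} f - integral {a..t} f = integral {t..R} f) at_top"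
  proof (rule eventually_at_top_linorderI[of t])
    fix R assume "t \<le> R"
    have fi: "f integrable_on {a..R}"
      by (rule integrable_continuous_real, rule continuous_on_subset[OF cont]) auto
    show "integral {a..R} f - integral {a..t} f = integral {t..R} f"
      using Henstock_Kurzweil_Integration.integral_combine[OF at \<open>t \<le> R\<close> fi] by linarith
  qed
  have "((\<lambda>R. integral {t..R} f) \<longlongrightarrow> L - integral {a..t} f) at_top"
    by (rule Lim_transform_eventually[OF tendsto_diff[OF L tendsto_const] ev])
  from tail_lim[OF this] La show "tail_conv f t" "tail_int f t = tail_int f a - integral {a..t} f"
    by auto
qed

lemma indef_deriv:
  fixes f :: "real \<Rightarrow> real"
  assumes cont: "continuous_on {a..} f" and at: "a < t"
  shows "((\<lambda>s. integral {a..s} f) has_real_derivative f t) (at t)"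
proof -
  have "((\<lambda>s. integral {a..s} f) has_real_derivative f t) (at t within {a..t+1})"
    by (rule integral_has_real_derivative, rule continuous_on_subset[OF cont]) (use at in auto)
  moreover have "at t within {a..t+1} = at t"
    by (rule at_within_interior) (use at in auto)
  ultimately show ?thesis by simp
qed

lemma tail_deriv:
  fixes f :: "real \<Rightarrow> real"
  assumes cont: "continuous_on {a..} f" and conv: "tail_conv f a" and at: "a < t"
  shows "(tail_int f has_real_derivative - f t) (at t)"
proof -
  have "((\<lambda>s. tail_int f a - integral {a..s} f) has_real_derivative - f t) (at t)"
    using DERIV_diff[OF DERIV_const indef_deriv[OF cont at]] by simp
  then show ?thesis
  proof (rule has_field_derivative_transform_within_open[of _ _ _ "{a<..}"])
    fix x assume "x \<in> {a<..}"
    then show "tail_int f a - integral {a..x} f = tail_int f x"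
      using tail_split(2)[OF cont conv, of x] by simp
  qed (use at in simp_all)
qed

lemma indef_cont:
  fixes f :: "real \<Rightarrow> real"
  assumes cont: "continuous_on {a..} f"
  shows "continuous_on {a..} (\<lambda>s. integral {a..s} f)"
proof -
  have 1: "continuous_on {a..a+1} (\<lambda>s. integral {a..s} f)"
    by (rule indefinite_integral_continuous_1, rule integrable_continuous_real,
        rule continuous_on_subset[OF cont]) auto
  have 2: "continuous_on {a+1..} (\<lambda>s. integral {a..s} f)"
  proof (rule continuous_at_imp_continuous_on, intro ballI)
    fix x assume "x \<in> {a+1..}"
    then show "isCont (\<lambda>s. integral {a..s} f) x"
      by (intro DERIV_isCont[OF indef_deriv[OF cont]]) simp
  qed
  have "continuous_on ({a..a+1} \<union> {a+1..}) (\<lambda>s. integral {a..s} f)"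
    by (rule continuous_on_closed_Un[OF closed_atLeastAtMost closed_atLeast 1 2])
  moreover have "{a..a+1} \<union> {a+1..} = {a..}" by auto
  ultimately show ?thesis by metis
qed

lemma tail_cont:
  fixes f :: "real \<Rightarrow> real"
  assumes cont: "continuous_on {a..} f" and conv: "tail_conv f a"
  shows "continuous_on {a..} (tail_int f)"
proof -
  have "continuous_on {a..} (\<lambda>s. tail_int f a - integral {a..s} f)"
    by (intro continuous_intros indef_cont cont)
  then show ?thesis
  proof (rule continuous_on_eq)
    fix x assume "x \<in> {a..}"
    then have "a \<le> x" by simp
    show "tail_int f a - integral {a..x} f = tail_int f x"
      using tail_split(2)[OF cont conv \<open>a \<le> x\<close>] by linarith
  qed
qed

lemma tail_abs:
  fixes f :: "real \<Rightarrow> real"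
  assumes "f absolutely_integrable_on {a..}"
  shows "tail_conv f a" "tail_int f a = integral {a..} f"
proof -
  have "((\<lambda>b. set_lebesgue_integral lebesgue {a..b} f) \<longlongrightarrow> set_lebesgue_integral lebesgue {a..} f) at_top"
    by (rule tendsto_set_lebesgue_integral_at_top) (use assms in auto)
  moreover have "set_lebesgue_integral lebesgue {a..} f = integral {a..} f"
    using set_lebesgue_integral_eq_integral(2)[OF assms] .
  moreover have "set_lebesgue_integral lebesgue {a..b} f = integral {a..b} f" for b
    by (rule set_lebesgue_integral_eq_integral(2), rule set_integrable_subset[OF assms]) auto
  ultimately have "((\<lambda>R. integral {a..R} f) \<longlongrightarrow> integral {a..} f) at_top" by simp
  from tail_lim[OF this] show "tail_conv f a" "tail_int f a = integral {a..} f" by auto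
qed

lemma tail_nonneg:
  fixes f :: "real \<Rightarrow> real"
  assumes cont: "continuous_on {a..} f" and conv: "tail_conv f a" and nn: "\<And>x. x \<ge> a \<Longrightarrow> f x \<ge> 0"
  shows "f absolutely_integrable_on {a..}" "integral {a..} f = tail_int f a"
proof -
  obtain L where L: "((\<lambda>R. integral {a..R} f) \<longlongrightarrow> L) at_top"
    using conv unfolding tail_conv_def by blast
  have "(f has_integral L) {a..}"
    by (rule has_integral_to_inf[OF _ L nn], rule integrable_continuous_real,
        rule continuous_on_subset[OF cont]) auto
  then show "f absolutely_integrable_on {a..}" "integral {a..} f = tail_int f a"
    using nonnegative_absolutely_integrable_1[of f "{a..}"] nn tail_lim(1)[OF L]
    by (auto simp: integral_unique has_integral_integrable)
qed

lemma dom_abs: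
  fixes f g :: "real \<Rightarrow> real"
  assumes cont: "continuous_on {a..} f" and g: "g integrable_on {a..}"
    and le: "\<And>x. x \<ge> a \<Longrightarrow> \<bar>f x\<bar> \<le> g x"
  shows "f absolutely_integrable_on {a..}"
  by (rule measurable_bounded_by_integrable_imp_absolutely_integrable[OF
      continuous_imp_measurable_on_sets_lebesgue[OF cont] _ g]) (use le in auto)

lemma abs_sub:
  fixes f :: "real \<Rightarrow> real"
  assumes "f absolutely_integrable_on {a..}" "a \<le> t"
  shows "f absolutely_integrable_on {t..}"
  by (rule set_integrable_subset[OF assms(1)]) (use assms(2) in auto)

lemma Qtab_low: "k \<le> n \<Longrightarrow> Qtab M n k = QQ M k"
proof (induction n arbitrary: k)
  case 0 then show ?case by (simp add: QQ_def)
next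
  case (Suc n)
  show ?case
  proof (cases "k = Suc n")
    case True then show ?thesis by (simp add: QQ_def)
  next
    case False then show ?thesis using Suc by (simp del: Qtab.simps(2) add: Qtab.simps(2)[of M n])
  qed
qed

lemma QQ_0: "QQ M 0 = (\<lambda>t. 0)"
  by (simp add: QQ_def)

lemma QQ_Suc: "QQ M (Suc n) = (\<lambda>t. - tail_int (qq M (Suc n)) t)"
proof -
  have "qof M (Qtab M n) (Suc n) = qq M (Suc n)"
    unfolding qq_def qof_def
    by (intro ext) (auto intro!: sum.cong simp: Qtab_low)
  then show ?thesis by (simp add: QQ_def)
qed

lemma qq_1: "qq M 1 = M"
  by (simp add: qq_def qof_def fun_eq_iff)

lemma qq_ge2: "k \<ge> 2 \<Longrightarrow> qq M k t = (\<Sum>j=1..k-1. QQ M j t * QQ M (k-j) t)"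
  by (simp add: qq_def qof_def)

lemma conv_le:
  fixes a :: "nat \<Rightarrow> real"
  assumes nn: "\<And>j. a j \<ge> 0"
  shows "(\<Sum>k=2..n+1. \<Sum>j=1..k-1. a j * a (k-j)) \<le> (\<Sum>j=1..n. a j)^2"
proof -
  define P where "P = {(i,j). 1 \<le> i \<and> 1 \<le> j \<and> i + j \<le> n+1}"
  have "(\<Sum>k=2..n+1. \<Sum>j=1..k-1. a j * a (k-j)) = (\<Sum>(k,j)\<in>Sigma {2..n+1} (\<lambda>k. {1..k-1}). a j * a (k-j))"
    by (rule sum.Sigma) auto
  also have "\<dots> = (\<Sum>(i,j)\<in>P. a i * a j)"
    by (rule sum.reindex_bij_witness[where i="\<lambda>(i,j). (i+j, i)" and j="\<lambda>(k,j). (j, k-j)"])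
       (auto simp: P_def)
  also have "\<dots> \<le> (\<Sum>(i,j)\<in>{1..n}\<times>{1..n}. a i * a j)"
    by (rule sum_mono2) (auto simp: P_def nn)
  also have "\<dots> = (\<Sum>j=1..n. a j)^2"
    by (simp add: power2_eq_square sum_product sum.cartesian_product)
  finally show ?thesis .
qed

lemma tail_neg:
  assumes "tail_conv g t"
  shows "tail_int (\<lambda>s. - g s) t = - tail_int g t"
proof -
  obtain L where L: "((\<lambda>R. integral {t..R} g) \<longlongrightarrow> L) at_top"
    using assms unfolding tail_conv_def by blast
  have "((\<lambda>R. integral {t..R} (\<lambda>s. - g s)) \<longlongrightarrow> - L) at_top"
    using tendsto_minus[OF L] by simp
  then show ?thesis using tail_lim(1)[OF L] tail_lim(1) by metis
qed

locale rsetup =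
  fixes M :: "real \<Rightarrow> real" and T :: real
  assumes Mcont: "continuous_on {0..} M"
  and c1: "tail_conv M 0"
  and c2: "tail_conv (tail_int M) 0"
  and c3: "tail_conv (\<lambda>s. (tail_int M s)^2) 0"
  and c4: "tail_conv (\<lambda>s. tail_int (\<lambda>\<sigma>. (tail_int M \<sigma>)^2) s) 0"
  and Tpos: "T > 0"
  and Tphi: "\<forall>t\<ge>T. phi M t \<le> 6 powr (-4)"
begin

definition u where "u = tail_int (\<lambda>s. (tail_int M s)^2)"

lemma Q1_eq: "QQ M 1 = (\<lambda>t. - tail_int M t)"
proof -
  have "qq M (Suc 0) = M" by (simp add: qq_def qof_def fun_eq_iff)
  then show ?thesis using QQ_Suc[of M 0] by simp
qed

lemma cM: "continuous_on {0..} (tail_int M)"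
  by (rule tail_cont[OF Mcont c1])

lemma Q1_cont: "continuous_on {0..} (QQ M 1)"
  unfolding Q1_eq by (intro continuous_intros cM)

lemma Q1_deriv: "t > 0 \<Longrightarrow> (QQ M 1 has_real_derivative M t) (at t)"
  unfolding Q1_eq using DERIV_minus[OF tail_deriv[OF Mcont c1]] by simp

lemma sq_cont: "continuous_on {0..} (\<lambda>s. (tail_int M s)^2)"
  by (intro continuous_intros cM)

lemma u_cont: "continuous_on {0..} u"
  unfolding u_def by (rule tail_cont[OF sq_cont c3])

lemma u_deriv: "t > 0 \<Longrightarrow> (u has_real_derivative (- ((tail_int M t)^2))) (at t)"
  unfolding u_def by (rule tail_deriv[OF sq_cont c3])

lemma u_int: "t \<ge> 0 \<Longrightarrow> (\<lambda>s. (tail_int M s)^2) absolutely_integrable_on {t..} \<and>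
    integral {t..} (\<lambda>s. (tail_int M s)^2) = u t"
proof -
  assume t: "t \<ge> 0"
  have cc: "continuous_on {t..} (\<lambda>s. (tail_int M s)^2)"
    by (rule continuous_on_subset[OF sq_cont]) (use t in auto)
  have cv: "tail_conv (\<lambda>s. (tail_int M s)^2) t" by (rule tail_split(1)[OF sq_cont c3 t])
  show ?thesis using tail_nonneg[OF cc cv] unfolding u_def by simp
qed

lemma u_nonneg: "t \<ge> 0 \<Longrightarrow> u t \<ge> 0"
  using u_int[of t] integral_nonneg[of "\<lambda>s. (tail_int M s)^2" "{t..}"]
  by (auto dest: set_lebesgue_integral_eq_integral(1))

lemma u_mono: "0 \<le> t \<Longrightarrow> t \<le> s \<Longrightarrow> u s \<le> u t"
proof -
  assume a: "0 \<le> t" "t \<le> s"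
  have cc: "continuous_on {t..} (\<lambda>s. (tail_int M s)^2)"
    by (rule continuous_on_subset[OF sq_cont]) (use a in auto)
  have cv: "tail_conv (\<lambda>s. (tail_int M s)^2) t" by (rule tail_split(1)[OF sq_cont c3 a(1)])
  have "u s = u t - integral {t..s} (\<lambda>s. (tail_int M s)^2)"
    unfolding u_def by (rule tail_split(2)[OF cc cv a(2)])
  moreover have "integral {t..s} (\<lambda>s. (tail_int M s)^2) \<ge> 0"
    by (rule integral_nonneg) (auto intro!: integrable_continuous_real continuous_on_subset[OF cc])
  ultimately show ?thesis by linarith
qed

lemma QQ2_eq: "QQ M 2 = (\<lambda>t. - u t)"
proof -
  have "qq M 2 = (\<lambda>s. (tail_int M s)^2)"
    by (rule ext, subst qq_ge2) (auto simp: Q1_eq[unfolded One_nat_def] power2_eq_square)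
  then show ?thesis using QQ_Suc[of M 1] by (simp add: u_def numeral_2_eq_2)
qed

lemma phi_eq: "t \<ge> 0 \<Longrightarrow> phi M t = tail_int u t"
proof -
  assume t: "t \<ge> 0"
  have "tail_conv u t" using tail_split(1)[OF u_cont c4[folded u_def] t] .
  then show ?thesis unfolding phi_def QQ2_eq by (simp add: tail_neg)
qed

lemma u_int2: "t \<ge> 0 \<Longrightarrow> u absolutely_integrable_on {t..} \<and> integral {t..} u = phi M t"
proof -
  assume t: "t \<ge> 0"
  have cc: "continuous_on {t..} u"
    by (rule continuous_on_subset[OF u_cont]) (use t in auto)
  have cv: "tail_conv u t" by (rule tail_split(1)[OF u_cont c4[folded u_def] t])
  have nn: "\<And>x. x \<ge> t \<Longrightarrow> u x \<ge> 0" using u_nonneg t by auto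
  show ?thesis using tail_nonneg[OF cc cv nn] phi_eq[OF t] by simp
qed

lemma phi_deriv: "t > 0 \<Longrightarrow> (phi M has_real_derivative - u t) (at t)"
proof -
  assume t: "t > 0"
  have "(tail_int u has_real_derivative - u t) (at t)"
    by (rule tail_deriv[OF u_cont c4[folded u_def] t])
  then show ?thesis
    by (rule has_field_derivative_transform_within_open[of _ _ _ "{0<..}"])
       (use t phi_eq in auto)
qed

lemma phi_nonneg: "t \<ge> 0 \<Longrightarrow> phi M t \<ge> 0"
  using u_int2[of t] integral_nonneg[of u "{t..}"] u_nonneg
  by (auto dest: set_lebesgue_integral_eq_integral(1))

end

lemma ai_int: "f absolutely_integrable_on S \<Longrightarrow> (f::real\<Rightarrow>real) integrable_on S"
  using absolutely_integrable_on_def by blast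

lemma ai_abs: fixes f :: "real \<Rightarrow> real"
  shows "f absolutely_integrable_on S \<Longrightarrow> (\<lambda>x. \<bar>f x\<bar>) integrable_on S"
  by (simp add: absolutely_integrable_on_def)

context rsetup begin

lemma Tphi': "t \<ge> T \<Longrightarrow> phi M t \<le> 1/1296"
proof -
  have "(6::real) powr (-4) = 1/1296" by (simp add: powr_minus powr_numeral)
  then show "t \<ge> T \<Longrightarrow> phi M t \<le> 1/1296" using Tphi by auto
qed

lemma usq: assumes t: "t \<ge> T"
  shows "(\<lambda>s. (u s)^2) absolutely_integrable_on {t..}"
    "integral {t..} (\<lambda>s. (u s)^2) \<le> u t * phi M t"
proof -
  have t0: "t \<ge> 0" using t Tpos by simp
  have ui: "u absolutely_integrable_on {t..}" "integral {t..} u = phi M t" using u_int2[OF t0] by auto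
  have gi: "(\<lambda>s. u t * u s) integrable_on {t..}"
    using integrable_cmul[OF ai_int[OF ui(1)], of "u t"] by simp
  have bd: "\<bar>(u s)^2\<bar> \<le> u t * u s" if "s \<in> {t..}" for s
  proof -
    have "0 \<le> u s" "u s \<le> u t" using that t0 u_nonneg u_mono by auto
    then show ?thesis by (simp add: power2_eq_square mult_right_mono)
  qed
  have cc: "continuous_on {t..} (\<lambda>s. (u s)^2)"
    by (intro continuous_intros continuous_on_subset[OF u_cont]) (use t0 in auto)
  show ai: "(\<lambda>s. (u s)^2) absolutely_integrable_on {t..}"
    by (rule dom_abs[OF cc gi]) (use bd in auto)
  have "integral {t..} (\<lambda>s. (u s)^2) \<le> integral {t..} (\<lambda>s. u t * u s)"
    by (rule integral_le[OF ai_int[OF ai] gi]) (use bd in auto)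
  also have "\<dots> = u t * phi M t" using ui(2) by simp
  finally show "integral {t..} (\<lambda>s. (u s)^2) \<le> u t * phi M t" .
qed

definition gg where "gg s = (1/18) * (tail_int M s)^2 + 76 * (u s)^2"

lemma gg_int: assumes t: "t \<ge> T"
  shows "gg absolutely_integrable_on {t..}" "integral {t..} gg \<le> u t"
proof -
  have t0: "t \<ge> 0" using t Tpos by simp
  have a1: "(\<lambda>s. (tail_int M s)^2) absolutely_integrable_on {t..}"
    and e1: "integral {t..} (\<lambda>s. (tail_int M s)^2) = u t" using u_int[OF t0] by auto
  have a2: "(\<lambda>s. (u s)^2) absolutely_integrable_on {t..}" using usq[OF t] by simp
  have i1: "(\<lambda>s. (1/18) * (tail_int M s)^2) integrable_on {t..}"
    using integrable_cmul[OF ai_int[OF a1], of "1/18"] by simp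
  have i2: "(\<lambda>s. 76 * (u s)^2) integrable_on {t..}"
    using integrable_cmul[OF ai_int[OF a2], of "76"] by simp
  have nn: "gg s \<ge> 0" for s unfolding gg_def by simp
  have gi: "gg integrable_on {t..}" unfolding gg_def by (rule integrable_add[OF i1 i2])
  show "gg absolutely_integrable_on {t..}" by (rule nonnegative_absolutely_integrable_1[OF gi]) (simp add: nn)
  have "integral {t..} gg = (1/18) * u t + 76 * integral {t..} (\<lambda>s. (u s)^2)"
    unfolding gg_def using integral_add[OF i1 i2] e1 by simp
  also have "\<dots> \<le> (1/18) * u t + 76 * (u t * phi M t)"
    using usq(2)[OF t] by simp
  also have "\<dots> \<le> (1/18) * u t + 76 * (u t * (1/1296))"
    using mult_left_mono[OF Tphi'[OF t] u_nonneg[OF t0]] by linarith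
  also have "\<dots> \<le> u t" using u_nonneg[OF t0] by simp
  finally show "integral {t..} gg \<le> u t" .
qed

lemma Q1_contT: "continuous_on {T..} (QQ M 1)"
  by (rule continuous_on_subset[OF Q1_cont]) (use Tpos in auto)

lemma u_contT: "continuous_on {T..} u"
  by (rule continuous_on_subset[OF u_cont]) (use Tpos in auto)

definition good :: "nat \<Rightarrow> bool" where "good n \<longleftrightarrow> (\<forall>k. 2 \<le> k \<and> k \<le> n \<longrightarrow> continuous_on {T..} (QQ M k)) \<and>
   (\<forall>s\<ge>T. (\<Sum>k=2..n. \<bar>QQ M k s\<bar>) \<le> 2 * u s)"

lemma good2: "good 2"
  unfolding good_def
proof (intro conjI allI impI)
  fix k :: nat assume "2 \<le> k \<and> k \<le> 2"
  then have "k = 2" by simp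
  have "continuous_on {T..} (\<lambda>t. - u t)"
    by (intro continuous_intros u_contT)
  then show "continuous_on {T..} (QQ M k)" using \<open>k = 2\<close> QQ2_eq by simp
next
  fix s assume "s \<ge> T"
  then show "(\<Sum>k=2..2. \<bar>QQ M k s\<bar>) \<le> 2 * u s" using u_nonneg[of s] Tpos by (simp add: QQ2_eq)
qed

end

lemma amgm: "4 * (x::real) * y \<le> (1/18) * x^2 + 72 * y^2"
proof -
  have "0 \<le> (1/18) * (x - 36*y)^2" by simp
  then show ?thesis by (simp add: power2_eq_square algebra_simps)
qed

context rsetup begin

lemma good_step: assumes n2: "n \<ge> 2" and G: "good n" shows "good (Suc n)"
proof -
  have Gc: "\<And>k. 2 \<le> k \<Longrightarrow> k \<le> n \<Longrightarrow> continuous_on {T..} (QQ M k)"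
    and Gs: "\<And>s. s \<ge> T \<Longrightarrow> (\<Sum>k=2..n. \<bar>QQ M k s\<bar>) \<le> 2 * u s"
    using G unfolding good_def by auto
  have Qc: "continuous_on {T..} (QQ M j)" if "1 \<le> j" "j \<le> n" for j
  proof (cases "j = 1")
    case True then show ?thesis using Q1_contT by simp
  next
    case False then show ?thesis using Gc that by simp
  qed
  have qc: "continuous_on {T..} (qq M k)" if k: "3 \<le> k" "k \<le> Suc n" for k
  proof -
    have "qq M k = (\<lambda>t. \<Sum>j=1..k-1. QQ M j t * QQ M (k-j) t)"
      by (rule ext, rule qq_ge2) (use k in simp)
    moreover have "continuous_on {T..} (\<lambda>t. \<Sum>j=1..k-1. QQ M j t * QQ M (k-j) t)"
      by (intro continuous_on_sum continuous_on_mult Qc) (use k in auto)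
    ultimately show ?thesis by simp
  qed
  have pw: "(\<Sum>k=3..Suc n. \<bar>qq M k s\<bar>) \<le> gg s" if s: "s \<ge> T" for s
  proof -
    define a where "a j = \<bar>QQ M j s\<bar>" for j
    have a0: "\<And>j. a j \<ge> 0" unfolding a_def by simp
    define A where "A = (\<Sum>j=2..n. a j)"
    have A0: "A \<ge> 0" unfolding A_def using a0 by (simp add: sum_nonneg)
    have Au: "A \<le> 2 * u s" unfolding A_def a_def using Gs[OF s] .
    have "(\<Sum>k=3..Suc n. \<bar>qq M k s\<bar>) \<le> (\<Sum>k=3..Suc n. \<Sum>j=1..k-1. a j * a (k-j))"
    proof (rule sum_mono)
      fix k assume "k \<in> {3..Suc n}"
      then have "qq M k s = (\<Sum>j=1..k-1. QQ M j s * QQ M (k-j) s)" by (intro qq_ge2) simp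
      then show "\<bar>qq M k s\<bar> \<le> (\<Sum>j=1..k-1. a j * a (k-j))"
        unfolding a_def using sum_abs[of "\<lambda>j. QQ M j s * QQ M (k-j) s" "{1..k-1}"]
        by (simp add: abs_mult)
    qed
    also have "\<dots> = (\<Sum>k=2..n+1. \<Sum>j=1..k-1. a j * a (k-j)) - a 1 * a 1"
    proof -
      have "(\<Sum>k=2..n+1. \<Sum>j=1..k-1. a j * a (k-j)) = (\<Sum>j=1..2-1. a j * a (2-j)) + (\<Sum>k=Suc 2..n+1. \<Sum>j=1..k-1. a j * a (k-j))"
        by (rule sum.atLeast_Suc_atMost) (use n2 in simp)
      then show ?thesis by (simp add: numeral_3_eq_3)
    qed
    also have "\<dots> \<le> (\<Sum>j=1..n. a j)^2 - a 1 * a 1"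
      using conv_le[of a n, OF a0] by simp
    also have "(\<Sum>j=1..n. a j) = a 1 + A"
      unfolding A_def by (subst sum.atLeast_Suc_atMost) (use n2 in \<open>simp_all add: numeral_2_eq_2\<close>)
    also have "(a 1 + A)^2 - a 1 * a 1 = 2 * a 1 * A + A^2" by (simp add: power2_eq_square algebra_simps)
    also have "\<dots> \<le> 4 * a 1 * u s + 4 * (u s)^2"
    proof -
      have "2 * a 1 * A \<le> 2 * a 1 * (2 * u s)" using mult_left_mono[OF Au, of "2 * a 1"] a0[of 1] by simp
      moreover have "A^2 \<le> (2 * u s)^2" using power_mono[OF Au A0, of 2] by simp
      ultimately show ?thesis by (simp add: power2_eq_square algebra_simps)
    qed
    also have "\<dots> \<le> (1/18) * (a 1)^2 + 76 * (u s)^2" using amgm[of "a 1" "u s"] by simp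
    also have "(a 1)^2 = (tail_int M s)^2" unfolding a_def by (simp add: Q1_eq[unfolded One_nat_def])
    finally show ?thesis unfolding gg_def .
  qed
  have pw1: "\<bar>qq M k s\<bar> \<le> gg s" if "s \<ge> T" "3 \<le> k" "k \<le> Suc n" for s k
  proof -
    have "\<bar>qq M k s\<bar> \<le> (\<Sum>k=3..Suc n. \<bar>qq M k s\<bar>)"
      by (rule member_le_sum) (use that in auto)
    then show ?thesis using pw[OF that(1)] by simp
  qed
  have qa: "qq M k absolutely_integrable_on {t..}" if "t \<ge> T" "3 \<le> k" "k \<le> Suc n" for t k
  proof (rule dom_abs)
    show "continuous_on {t..} (qq M k)"
      by (rule continuous_on_subset[OF qc]) (use that in auto)
    show "gg integrable_on {t..}" using gg_int(1)[OF that(1)] by (rule ai_int)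
    show "\<And>x. t \<le> x \<Longrightarrow> \<bar>qq M k x\<bar> \<le> gg x" using pw1 that by auto
  qed
  have Qb: "\<bar>QQ M k t\<bar> \<le> integral {t..} (\<lambda>s. \<bar>qq M k s\<bar>)" if tk: "t \<ge> T" "3 \<le> k" "k \<le> Suc n" for t k
  proof -
    obtain m where m: "k = Suc m" using tk by (cases k) auto
    have "QQ M k t = - integral {t..} (qq M k)"
      using QQ_Suc[of M m] tail_abs(2)[OF qa[OF tk]] m by simp
    moreover have "norm (integral {t..} (qq M k)) \<le> integral {t..} (\<lambda>s. \<bar>qq M k s\<bar>)"
      by (rule integral_norm_bound_integral[OF ai_int[OF qa[OF tk]] ai_abs[OF qa[OF tk]]]) simp
    ultimately show ?thesis by simp
  qed
  have Sb: "(\<Sum>k=2..Suc n. \<bar>QQ M k t\<bar>) \<le> 2 * u t" if t: "t \<ge> T" for t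
  proof -
    have t0: "t \<ge> 0" using t Tpos by simp
    have "(\<Sum>k=3..Suc n. \<bar>QQ M k t\<bar>) \<le> (\<Sum>k=3..Suc n. integral {t..} (\<lambda>s. \<bar>qq M k s\<bar>))"
      by (rule sum_mono) (use Qb t in auto)
    also have "\<dots> = integral {t..} (\<lambda>s. \<Sum>k=3..Suc n. \<bar>qq M k s\<bar>)"
      by (rule integral_sum[symmetric]) (use ai_abs[OF qa] t in auto)
    also have "\<dots> \<le> integral {t..} gg"
    proof (rule integral_le)
      show "(\<lambda>s. \<Sum>k=3..Suc n. \<bar>qq M k s\<bar>) integrable_on {t..}"
        by (rule integrable_sum) (use ai_abs[OF qa] t in auto)
      show "gg integrable_on {t..}" using gg_int(1)[OF t] by (rule ai_int)
      show "\<And>x. x \<in> {t..} \<Longrightarrow> (\<Sum>k=3..Suc n. \<bar>qq M k x\<bar>) \<le> gg x" using pw t by auto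
    qed
    also have "\<dots> \<le> u t" by (rule gg_int(2)[OF t])
    finally have "(\<Sum>k=3..Suc n. \<bar>QQ M k t\<bar>) \<le> u t" .
    moreover have "(\<Sum>k=2..Suc n. \<bar>QQ M k t\<bar>) = \<bar>QQ M 2 t\<bar> + (\<Sum>k=3..Suc n. \<bar>QQ M k t\<bar>)"
      by (subst sum.atLeast_Suc_atMost) (use n2 in \<open>simp_all add: numeral_3_eq_3\<close>)
    moreover have "\<bar>QQ M 2 t\<bar> = u t" using u_nonneg[OF t0] by (simp add: QQ2_eq)
    ultimately show ?thesis by simp
  qed
  have Cn: "continuous_on {T..} (QQ M (Suc n))"
  proof -
    have cc: "continuous_on {T..} (qq M (Suc n))" by (rule qc) (use n2 in auto)
    have cv: "tail_conv (qq M (Suc n)) T" by (rule tail_abs(1)[OF qa]) (use n2 in auto)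
    have "continuous_on {T..} (\<lambda>t. - tail_int (qq M (Suc n)) t)"
      by (intro continuous_intros tail_cont[OF cc cv])
    then show ?thesis using QQ_Suc[of M n] by simp
  qed
  show ?thesis unfolding good_def
  proof (intro conjI allI impI)
    fix k :: nat assume "2 \<le> k \<and> k \<le> Suc n"
    then show "continuous_on {T..} (QQ M k)" using Gc Cn by (cases "k = Suc n") auto
  next
    fix s assume "T \<le> s" then show "(\<Sum>k=2..Suc n. \<bar>QQ M k s\<bar>) \<le> 2 * u s" by (rule Sb)
  qed
qed

lemma good_all: "n \<ge> 2 \<Longrightarrow> good n"
proof (induction n rule: nat_induct_at_least)
  case base then show ?case by (rule good2)
next
  case (Suc n) then show ?case using good_step by simp
qed

end

context rsetup begin

lemma bfun_bound: assumes t: "t \<ge> T" shows "\<bar>bfun M t - QQ M 1 t\<bar> \<le> 2 * u t"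
proof -
  have t0: "t \<ge> 0" using t Tpos by simp
  define f where "f k = QQ M (Suc k) t" for k
  have ps: "(\<Sum>k\<le>m. \<bar>QQ M (k+2) t\<bar>) \<le> 2 * u t" for m
  proof -
    have "(\<Sum>k\<le>m. \<bar>QQ M (k+2) t\<bar>) = (\<Sum>k=2..m+2. \<bar>QQ M k t\<bar>)"
      using sum.shift_bounds_cl_nat_ivl[of "\<lambda>k. \<bar>QQ M k t\<bar>" 0 2 m] by (simp only: atMost_atLeast0 add_0_left)
    also have "\<dots> \<le> 2 * u t"
    proof -
      have "good (m+2)" by (rule good_all) simp
      then show ?thesis using t unfolding good_def by blast
    qed
    finally show ?thesis .
  qed
  have sa: "summable (\<lambda>k. \<bar>QQ M (k+2) t\<bar>)"
    by (rule bounded_imp_summable[OF _ ps]) simp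
  have sf1: "summable (\<lambda>k. f (Suc k))"
    using summable_rabs_cancel[OF sa] unfolding f_def by (simp add: add.commute)
  then have sf: "summable f" using summable_Suc_iff by blast
  have "bfun M t = suminf f" unfolding bfun_def f_def by simp
  also have "\<dots> = f 0 + (\<Sum>k. f (Suc k))" using suminf_split_head[OF sf] by simp
  finally have b: "bfun M t - QQ M 1 t = (\<Sum>k. f (Suc k))" unfolding f_def by simp
  have "\<bar>\<Sum>k. f (Suc k)\<bar> \<le> (\<Sum>k. \<bar>f (Suc k)\<bar>)"
    by (rule summable_rabs) (use sa in \<open>simp add: f_def add.commute\<close>)
  also have "\<dots> \<le> 2 * u t"
  proof (rule suminf_le_const)
    show "summable (\<lambda>k. \<bar>f (Suc k)\<bar>)" using sa by (simp add: f_def add.commute)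
    fix n show "(\<Sum>k<n. \<bar>f (Suc k)\<bar>) \<le> 2 * u t"
    proof (cases n)
      case 0 then show ?thesis using u_nonneg[OF t0] by simp
    next
      case (Suc m)
      have "{..<n} = {..m}" using Suc by auto
      then show ?thesis using ps[of m] by (simp add: f_def add.commute)
    qed
  qed
  finally show ?thesis using b by simp
qed

end

lemma tri3: fixes a b c :: real shows "\<bar>a + b - c\<bar> \<le> \<bar>a\<bar> + \<bar>b\<bar> + \<bar>c\<bar>"
  by linarith

lemma key_ineq:
  fixes Xa Ya Xb Yb c q m r :: real
  assumes r: "r > 0" and qb: "\<bar>q\<bar> \<le> r/4"
  defines "E \<equiv> Xa^2 + Ya^2 + Xb^2 + Yb^2"
    and "J \<equiv> Xa * Yb - Ya * Xb"
    and "Ed \<equiv> 2 * (Xa * (-2*c*Xa - r*Yb) + Ya * (-2*c*Ya + r*Xb) + Xb * (- r * Ya) + Yb * (r * Xa))"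
    and "Jd \<equiv> (-2*c*Xa - r*Yb) * Yb + Xa * (r * Xa) - (-2*c*Ya + r*Xb) * Xb - Ya * (- r * Ya)"
  shows "\<bar>Ed + 2 * (m * J + q * Jd) / r + 2 * q * (E + 2 * q * J / r)\<bar>
           \<le> (4/3) * (5 * \<bar>c - q\<bar> + \<bar>m\<bar> / r) * (E + 2 * q * J / r)"
    "E + 2 * q * J / r \<ge> 3/4 * E" "E + 2 * q * J / r \<le> 5/4 * E"
proof -
  define R where "R = c - q"
  define P where "P = Xa^2 + Ya^2"
  have P0: "0 \<le> P" "P \<le> E" unfolding P_def E_def by auto
  have Jb: "2 * \<bar>J\<bar> \<le> E"
  proof -
    have "(Xa - Yb)^2 + (Ya + Xb)^2 = E - 2 * J" "(Xa + Yb)^2 + (Ya - Xb)^2 = E + 2 * J"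
      unfolding E_def J_def by (simp_all add: power2_eq_square algebra_simps)
    moreover have "0 \<le> (Xa - Yb)^2 + (Ya + Xb)^2" "0 \<le> (Xa + Yb)^2 + (Ya - Xb)^2" by auto
    ultimately show ?thesis by linarith
  qed
  have E0: "0 \<le> E" unfolding E_def by simp
  have qJ: "\<bar>2 * q * J / r\<bar> \<le> E / 4"
  proof -
    have "\<bar>2 * q * J / r\<bar> = \<bar>q\<bar> * (2 * \<bar>J\<bar>) / r" using r by (simp add: abs_mult)
    also have "\<dots> \<le> (r/4) * E / r"
      by (intro divide_right_mono mult_mono qb Jb) (use r in auto)
    also have "\<dots> = E / 4" using r by simp
    finally show ?thesis .
  qed
  show F1: "E + 2 * q * J / r \<ge> 3/4 * E" "E + 2 * q * J / r \<le> 5/4 * E" using abs_le_D1[OF qJ] abs_le_D2[OF qJ] by linarith+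
  have id: "Ed + 2 * (m * J + q * Jd) / r + 2 * q * (E + 2 * q * J / r)
      = -4 * R * P + 2 * m * J / r - 4 * q * R * J / r"
    unfolding R_def P_def E_def J_def Ed_def Jd_def using r
    by (simp add: field_simps power2_eq_square)
  have "\<bar>-4 * R * P + 2 * m * J / r - 4 * q * R * J / r\<bar>
      \<le> 4 * \<bar>R\<bar> * P + \<bar>m\<bar> * (2 * \<bar>J\<bar>) / r + 2 * \<bar>R\<bar> * (\<bar>q\<bar> * (2 * \<bar>J\<bar>) / r)"
  proof -
    have t1: "\<bar>-4*R*P\<bar> = 4*\<bar>R\<bar>*P" using P0 by (simp add: abs_mult)
    have t2: "\<bar>2*m*J/r\<bar> = \<bar>m\<bar>*(2*\<bar>J\<bar>)/r" using r by (simp add: abs_mult)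
    have t3: "\<bar>4*q*R*J/r\<bar> = 2*\<bar>R\<bar>*(\<bar>q\<bar>*(2*\<bar>J\<bar>)/r)" using r by (simp add: abs_mult)
    have "\<bar>-4*R*P + 2*m*J/r - 4*q*R*J/r\<bar> \<le> \<bar>-4*R*P\<bar> + \<bar>2*m*J/r\<bar> + \<bar>4*q*R*J/r\<bar>"
      by (rule tri3)
    then show ?thesis unfolding t1 t2 t3 .
  qed
  also have "\<dots> \<le> 4 * \<bar>R\<bar> * E + \<bar>m\<bar> * E / r + 2 * \<bar>R\<bar> * ((r/4) * E / r)"
  proof -
    have "4 * \<bar>R\<bar> * P \<le> 4 * \<bar>R\<bar> * E" using P0 by (simp add: mult_left_mono)
    moreover have "\<bar>m\<bar> * (2 * \<bar>J\<bar>) / r \<le> \<bar>m\<bar> * E / r"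
      using Jb r by (simp add: divide_right_mono mult_left_mono)
    moreover have "\<bar>q\<bar> * (2 * \<bar>J\<bar>) / r \<le> (r/4) * E / r"
      by (intro divide_right_mono mult_mono qb Jb) (use r in auto)
    ultimately show ?thesis by (smt (verit) mult_left_mono abs_ge_zero)
  qed
  also have "\<dots> = (5 * \<bar>R\<bar> - \<bar>R\<bar>/2 + \<bar>m\<bar> / r) * E" using r by (simp add: field_simps)
  also have "\<dots> \<le> (5 * \<bar>R\<bar> + \<bar>m\<bar> / r) * E" using E0 by (simp add: mult_right_mono)
  also have "\<dots> \<le> (5 * \<bar>R\<bar> + \<bar>m\<bar> / r) * ((4/3) * (E + 2 * q * J / r))"
    by (rule mult_left_mono) (use F1 r in auto)
  also have "\<dots> = (4/3) * (5 * \<bar>R\<bar> + \<bar>m\<bar> / r) * (E + 2 * q * J / r)" using r by (simp add: field_simps)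
  finally have X: "\<bar>-4 * R * P + 2 * m * J / r - 4 * q * R * J / r\<bar> \<le> (4/3) * (5 * \<bar>R\<bar> + \<bar>m\<bar> / r) * (E + 2 * q * J / r)" .
  show "\<bar>Ed + 2 * (m * J + q * Jd) / r + 2 * q * (E + 2 * q * J / r)\<bar>
           \<le> (4/3) * (5 * \<bar>c - q\<bar> + \<bar>m\<bar> / r) * (E + 2 * q * J / r)"
    unfolding id using X unfolding R_def .
qed

lemma mono_ab:
  fixes f :: "real \<Rightarrow> real"
  assumes ab: "a \<le> b" and cf: "continuous_on {a..b} f"
    and d: "\<And>x. a < x \<Longrightarrow> x < b \<Longrightarrow> \<exists>D. (f has_real_derivative D) (at x) \<and> D \<le> 0"
  shows "f b \<le> f a"
proof (cases "a = b")
  case True then show ?thesis by simp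
next
  case False
  then have lt: "a < b" using ab by simp
  obtain l z where z: "a < z" "z < b" "DERIV f z :> l" "f b - f a = (b - a) * l"
    using MVT[OF lt cf] d real_differentiable_def by meson
  obtain D where D: "(f has_real_derivative D) (at z)" "D \<le> 0" using d z by blast
  have "l = D" using DERIV_unique[OF z(3) D(1)] .
  then have "(b - a) * l \<le> 0" using D lt by (simp add: mult_nonneg_nonpos)
  then show ?thesis using z by simp
qed

lemma ode_real:
  fixes x1 y1 x2 y2 c q m S H Hd :: "real \<Rightarrow> real" and r a b :: real
  assumes ab: "a \<le> b" and r: "r > 0"
    and cont: "continuous_on {a..b} x1" "continuous_on {a..b} y1" "continuous_on {a..b} x2"
      "continuous_on {a..b} y2" "continuous_on {a..b} q" "continuous_on {a..b} S" "continuous_on {a..b} H"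
    and dx1: "\<And>x. a < x \<Longrightarrow> x < b \<Longrightarrow> (x1 has_real_derivative (-2 * c x * x1 x - r * y2 x)) (at x)"
    and dy1: "\<And>x. a < x \<Longrightarrow> x < b \<Longrightarrow> (y1 has_real_derivative (-2 * c x * y1 x + r * x2 x)) (at x)"
    and dx2: "\<And>x. a < x \<Longrightarrow> x < b \<Longrightarrow> (x2 has_real_derivative (- r * y1 x)) (at x)"
    and dy2: "\<And>x. a < x \<Longrightarrow> x < b \<Longrightarrow> (y2 has_real_derivative (r * x1 x)) (at x)"
    and dq: "\<And>x. a < x \<Longrightarrow> x < b \<Longrightarrow> (q has_real_derivative m x) (at x)"
    and dS: "\<And>x. a < x \<Longrightarrow> x < b \<Longrightarrow> (S has_real_derivative (- q x)) (at x)"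
    and dH: "\<And>x. a < x \<Longrightarrow> x < b \<Longrightarrow> (H has_real_derivative Hd x) (at x)"
    and qb: "\<And>x. a \<le> x \<Longrightarrow> x \<le> b \<Longrightarrow> \<bar>q x\<bar> \<le> r / 4"
    and Sb: "\<And>x. a \<le> x \<Longrightarrow> x \<le> b \<Longrightarrow> \<bar>S x\<bar> \<le> 1"
    and Hb: "\<And>x. a < x \<Longrightarrow> x < b \<Longrightarrow> (4/3) * (5 * \<bar>c x - q x\<bar> + \<bar>m x\<bar> / r) \<le> Hd x"
  defines "E \<equiv> \<lambda>s. x1 s^2 + y1 s^2 + x2 s^2 + y2 s^2"
  shows "E b \<le> (5/3) * exp (4 + (H b - H a)) * E a \<and> E a \<le> (5/3) * exp (4 + (H b - H a)) * E b"
proof -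
  define J where "J = (\<lambda>s. x1 s * y2 s - y1 s * x2 s)"
  define F where "F = (\<lambda>s. E s + 2 * q s * J s / r)"
  define G where "G = (\<lambda>s. F s * exp (- 2 * S s))"
  have F34: "F s \<ge> 3/4 * E s" "F s \<le> 5/4 * E s" if "a \<le> s" "s \<le> b" for s
    using key_ineq(2,3)[where Xa="x1 s" and Ya="y1 s" and Xb="x2 s" and Yb="y2 s", OF r qb[OF that]]
    unfolding F_def E_def J_def by auto
  have E0: "E s \<ge> 0" for s unfolding E_def by simp
  have F0: "F s \<ge> 0" if "a \<le> s" "s \<le> b" for s using F34[OF that] E0[of s] by linarith
  have G0: "G s \<ge> 0" if "a \<le> s" "s \<le> b" for s using F0[OF that] unfolding G_def by simp
  have contG: "continuous_on {a..b} G"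
    unfolding G_def F_def J_def E_def by (intro continuous_intros cont) (use r in auto)
  have dG: "\<exists>Dg. (G has_real_derivative Dg) (at x) \<and> \<bar>Dg\<bar> \<le> Hd x * G x" if x: "a < x" "x < b" for x
  proof -
    define Ed where "Ed = 2 * (x1 x * (-2 * c x * x1 x - r * y2 x) + y1 x * (-2 * c x * y1 x + r * x2 x)
        + x2 x * (- r * y1 x) + y2 x * (r * x1 x))"
    define Jd where "Jd = (-2 * c x * x1 x - r * y2 x) * y2 x + x1 x * (r * x1 x)
        - (-2 * c x * y1 x + r * x2 x) * x2 x - y1 x * (- r * y1 x)"
    have hE: "(E has_real_derivative Ed) (at x)"
      unfolding E_def Ed_def
      by (auto intro!: derivative_eq_intros dx1[OF x] dy1[OF x] dx2[OF x] dy2[OF x] simp: algebra_simps)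
    have hJ: "(J has_real_derivative Jd) (at x)"
      unfolding J_def Jd_def
      by (auto intro!: derivative_eq_intros dx1[OF x] dy1[OF x] dx2[OF x] dy2[OF x] simp: algebra_simps)
    have hF: "(F has_real_derivative (Ed + 2 * (m x * J x + q x * Jd) / r)) (at x)"
      unfolding F_def
      using r by (auto intro!: derivative_eq_intros hE hJ dq[OF x] simp: algebra_simps add_divide_distrib)
    define Dg where "Dg = exp (- 2 * S x) * ((Ed + 2 * (m x * J x + q x * Jd) / r) + 2 * q x * F x)"
    have hG: "(G has_real_derivative Dg) (at x)"
      unfolding G_def Dg_def
      by (auto intro!: derivative_eq_intros hF dS[OF x] simp: algebra_simps)
    have K: "\<bar>Ed + 2 * (m x * J x + q x * Jd) / r + 2 * q x * F x\<bar> \<le> (4/3) * (5 * \<bar>c x - q x\<bar> + \<bar>m x\<bar> / r) * F x"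
      using key_ineq(1)[where Xa="x1 x" and Ya="y1 x" and Xb="x2 x" and Yb="y2 x" and c="c x" and m="m x" and q="q x" and r=r, OF r qb[of x]] x
      unfolding F_def E_def J_def Ed_def Jd_def by auto
    have "\<bar>Dg\<bar> = exp (- 2 * S x) * \<bar>Ed + 2 * (m x * J x + q x * Jd) / r + 2 * q x * F x\<bar>"
      unfolding Dg_def by (simp add: abs_mult)
    also have "\<dots> \<le> exp (- 2 * S x) * ((4/3) * (5 * \<bar>c x - q x\<bar> + \<bar>m x\<bar> / r) * F x)"
      by (rule mult_left_mono[OF K]) simp
    also have "\<dots> \<le> exp (- 2 * S x) * (Hd x * F x)"
      by (intro mult_left_mono mult_right_mono Hb x F0) (use x in auto)
    also have "\<dots> = Hd x * G x" unfolding G_def by simp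
    finally show ?thesis using hG by blast
  qed
  have contH: "continuous_on {a..b} (\<lambda>s. exp (H s))" "continuous_on {a..b} (\<lambda>s. exp (- H s))"
    by (intro continuous_intros cont)+
  have up: "G b * exp (- H b) \<le> G a * exp (- H a)"
  proof (rule mono_ab[OF ab])
    show "continuous_on {a..b} (\<lambda>s. G s * exp (- H s))" by (intro continuous_intros contG cont)
    fix x assume x: "a < x" "x < b"
    obtain Dg where Dg: "(G has_real_derivative Dg) (at x)" "\<bar>Dg\<bar> \<le> Hd x * G x" using dG[OF x] by blast
    have "((\<lambda>s. G s * exp (- H s)) has_real_derivative (exp (- H x) * (Dg - Hd x * G x))) (at x)"
      by (auto intro!: derivative_eq_intros Dg(1) dH[OF x] simp: algebra_simps)
    moreover have "exp (- H x) * (Dg - Hd x * G x) \<le> 0"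
      using Dg(2) by (intro mult_nonneg_nonpos) auto
    ultimately show "\<exists>D. ((\<lambda>s. G s * exp (- H s)) has_real_derivative D) (at x) \<and> D \<le> 0" by blast
  qed
  have down: "G a * exp (H a) \<le> G b * exp (H b)"
  proof -
    have "- (G b * exp (H b)) \<le> - (G a * exp (H a))"
    proof (rule mono_ab[OF ab, of "\<lambda>s. - (G s * exp (H s))"])
      show "continuous_on {a..b} (\<lambda>s. - (G s * exp (H s)))" by (intro continuous_intros contG cont)
      fix x assume x: "a < x" "x < b"
      obtain Dg where Dg: "(G has_real_derivative Dg) (at x)" "\<bar>Dg\<bar> \<le> Hd x * G x" using dG[OF x] by blast
      have "((\<lambda>s. - (G s * exp (H s))) has_real_derivative (- (exp (H x) * (Dg + Hd x * G x)))) (at x)"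
        by (auto intro!: derivative_eq_intros Dg(1) dH[OF x] simp: algebra_simps)
      moreover have "- (exp (H x) * (Dg + Hd x * G x)) \<le> 0"
        using Dg(2) by (simp add: abs_le_iff)
      ultimately show "\<exists>D. ((\<lambda>s. - (G s * exp (H s))) has_real_derivative D) (at x) \<and> D \<le> 0" by blast
    qed
    then show ?thesis by simp
  qed
  have aa: "a \<le> a" "a \<le> b" and bb: "a \<le> b" "b \<le> b" using ab by auto
  define K where "K = H b - H a"
  have e4: "exp (4::real) = exp 2 * exp 2" by (simp add: mult_exp_exp)
  have Ga: "G a = F a * exp (- 2 * S a)" and Gb: "G b = F b * exp (- 2 * S b)" unfolding G_def by auto
  have eSa: "exp (2 * S a) \<le> exp 2" "exp (- 2 * S a) \<le> exp 2" using Sb[OF aa] by (auto simp: abs_le_iff)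
  have eSb: "exp (2 * S b) \<le> exp 2" "exp (- 2 * S b) \<le> exp 2" using Sb[OF bb] by (auto simp: abs_le_iff)
  have Gb_le: "G b \<le> exp K * G a"
    using up unfolding K_def by (simp add: exp_diff field_simps exp_minus)
  have Ga_le: "G a \<le> exp K * G b"
    using down unfolding K_def by (simp add: exp_diff field_simps)
  have "E b \<le> (4/3) * F b" using F34[OF bb] by simp
  also have "\<dots> = (4/3) * exp (2 * S b) * G b" unfolding G_def by (simp add: exp_minus field_simps)
  also have "\<dots> \<le> (4/3) * exp 2 * (exp K * G a)"
    by (intro mult_mono mult_left_mono eSb Gb_le) (use G0[OF bb] G0[OF aa] in auto)
  also have "G a \<le> exp 2 * F a" unfolding G_def using eSa(2) F0[OF aa] by (simp add: mult_left_mono mult.commute)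
  then have "(4/3) * exp 2 * (exp K * G a) \<le> (4/3) * exp 2 * (exp K * (exp 2 * F a))" by simp
  also have "\<dots> \<le> (4/3) * exp 2 * (exp K * (exp 2 * ((5/4) * E a)))" using F34[OF aa] by simp
  also have "\<dots> = (5/3) * exp (4 + K) * E a" by (simp add: exp_add field_simps e4)
  finally have B1: "E b \<le> (5/3) * exp (4 + K) * E a" .
  have "E a \<le> (4/3) * F a" using F34[OF aa] by simp
  also have "\<dots> = (4/3) * exp (2 * S a) * G a" unfolding G_def by (simp add: exp_minus field_simps)
  also have "\<dots> \<le> (4/3) * exp 2 * (exp K * G b)"
    by (intro mult_mono mult_left_mono eSa Ga_le) (use G0[OF bb] G0[OF aa] in auto)
  also have "G b \<le> exp 2 * F b" unfolding G_def using eSb(2) F0[OF bb] by (simp add: mult_left_mono mult.commute)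
  then have "(4/3) * exp 2 * (exp K * G b) \<le> (4/3) * exp 2 * (exp K * (exp 2 * F b))" by simp
  also have "\<dots> \<le> (4/3) * exp 2 * (exp K * (exp 2 * ((5/4) * E b)))" using F34[OF bb] by simp
  also have "\<dots> = (5/3) * exp (4 + K) * E b" by (simp add: exp_add field_simps e4)
  finally have B2: "E a \<le> (5/3) * exp (4 + K) * E b" .
  show ?thesis using B1 B2 unfolding K_def by simp
qed

lemma Amat_1: "(Amat c r *v w) $ 1 = complex_of_real (-2 * c) * w $ 1 + \<i> * complex_of_real r * w $ 2"
  by (simp add: Amat_def matrix_vector_mult_def sum_2)

lemma Amat_2: "(Amat c r *v w) $ 2 = \<i> * complex_of_real r * w $ 1"
  by (simp add: Amat_def matrix_vector_mult_def sum_2)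

lemma norm_vec2: "(norm (w :: complex^2))^2 = (Re (w$1))^2 + (Im (w$1))^2 + (Re (w$2))^2 + (Im (w$2))^2"
  by (simp add: norm_vec_def L2_set_def sum_2 cmod_power2)

lemma comp_deriv:
  fixes w :: "real \<Rightarrow> complex^2"
  assumes "(w has_vector_derivative w') (at x)"
  shows "((\<lambda>s. Re (w s $ i)) has_real_derivative Re (w' $ i)) (at x)"
    "((\<lambda>s. Im (w s $ i)) has_real_derivative Im (w' $ i)) (at x)"
proof -
  have bl1: "bounded_linear (\<lambda>v::complex^2. Re (v $ i))"
    by (rule bounded_linear_compose[OF bounded_linear_Re bounded_linear_vec_nth])
  have bl2: "bounded_linear (\<lambda>v::complex^2. Im (v $ i))"
    by (rule bounded_linear_compose[OF bounded_linear_Im bounded_linear_vec_nth])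
  show "((\<lambda>s. Re (w s $ i)) has_real_derivative Re (w' $ i)) (at x)"
    using bounded_linear.has_vector_derivative[OF bl1 assms]
    by (simp add: has_real_derivative_iff_has_vector_derivative)
  show "((\<lambda>s. Im (w s $ i)) has_real_derivative Im (w' $ i)) (at x)"
    using bounded_linear.has_vector_derivative[OF bl2 assms]
    by (simp add: has_real_derivative_iff_has_vector_derivative)
qed

lemma comp_cont:
  fixes w :: "real \<Rightarrow> complex^2"
  assumes "continuous_on S w"
  shows "continuous_on S (\<lambda>s. Re (w s $ i))" "continuous_on S (\<lambda>s. Im (w s $ i))"
  by (intro continuous_intros assms)+

lemma tail_conv_neg: "tail_conv g t \<Longrightarrow> tail_conv (\<lambda>s. - g s) t"
  unfolding tail_conv_def using tendsto_minus by fastforce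

lemma lin_aux: fixes A Bv X U :: real
  assumes "(4/3)*A \<le> Bv" "X \<le> 2*U" "0 \<le> U" shows "4/3*(5*X + A) \<le> 14*U + Bv"
proof -
  have "4/3*(5*X + A) = 20/3*X + (4/3)*A" by (simp add: algebra_simps)
  then show ?thesis using assms by linarith
qed

lemma lin2: fixes a b Z :: real
  assumes "a \<le> 1/1296" "0 \<le> b" shows "14*(a-b) + Z \<le> 14/1296 + Z"
  using assms by simp

context rsetup begin

lemma S_conv: "tail_conv (QQ M 1) 0"
  unfolding Q1_eq by (rule tail_conv_neg[OF c2])

lemma main_est:
  fixes W :: "real \<Rightarrow> complex^2" and r t0 t C :: real and P Pd :: "real \<Rightarrow> real"
  assumes Wd: "\<forall>s\<ge>T. (W has_vector_derivative (Amat (bfun M s) r *v W s)) (at s within {T..})"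
    and r: "r > 0" and t0: "T \<le> t0" "t0 \<le> t"
    and qb: "\<And>s. t0 \<le> s \<Longrightarrow> s \<le> t \<Longrightarrow> \<bar>QQ M 1 s\<bar> \<le> r/4"
    and Sb: "\<forall>s\<ge>T. \<bar>tail_int (QQ M 1) s\<bar> \<le> 1"
    and dP: "\<And>x. x > 0 \<Longrightarrow> (P has_real_derivative Pd x) (at x)"
    and MP: "\<And>x. x > 0 \<Longrightarrow> \<bar>M x\<bar> \<le> C * Pd x" and C0: "C \<ge> 0"
  shows "(norm (W t))^2 \<le> (5/3) * exp (4 + (14/1296 + 2*C/r*(P t - P t0))) * (norm (W t0))^2 \<and>
         (norm (W t0))^2 \<le> (5/3) * exp (4 + (14/1296 + 2*C/r*(P t - P t0))) * (norm (W t))^2"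
proof -
  define H where "H = (\<lambda>s. -14 * phi M s + 2*C/r * P s)"
  define Hd where "Hd = (\<lambda>s. 14 * u s + 2*C/r * Pd s)"
  have T0: "T > 0" by (rule Tpos)
  have sub: "{t0..t} \<subseteq> {0..}" "{t0..t} \<subseteq> {T..}" using t0 T0 by auto
  have Wc: "continuous_on {T..} W"
    using Wd has_vector_derivative_continuous continuous_on_eq_continuous_within by fastforce
  have Wc': "continuous_on {t0..t} W" by (rule continuous_on_subset[OF Wc sub(2)])
  have Wat: "(W has_vector_derivative (Amat (bfun M x) r *v W x)) (at x)" if "t0 < x" for x
  proof -
    have "at x within {T..} = at x" by (rule at_within_interior) (use that t0 in auto)
    then show ?thesis using Wd that t0 by (metis less_imp_le order_trans)
  qed
  have contS: "continuous_on {t0..t} (tail_int (QQ M 1))"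
    by (rule continuous_on_subset[OF tail_cont[OF Q1_cont S_conv] sub(1)])
  have contq: "continuous_on {t0..t} (QQ M 1)" by (rule continuous_on_subset[OF Q1_cont sub(1)])
  have contH: "continuous_on {t0..t} H"
  proof (rule continuous_at_imp_continuous_on, intro ballI)
    fix x assume x: "x \<in> {t0..t}"
    then have "x > 0" using t0 T0 by auto
    then have "isCont (phi M) x" "isCont P x" using phi_deriv dP DERIV_isCont by blast+
    then show "isCont H x" unfolding H_def by (intro continuous_intros)
  qed
  have est: "(\<lambda>s. (Re (W s $ 1))^2 + (Im (W s $ 1))^2 + (Re (W s $ 2))^2 + (Im (W s $ 2))^2) t
      \<le> (5/3) * exp (4 + (H t - H t0)) * (\<lambda>s. (Re (W s $ 1))^2 + (Im (W s $ 1))^2 + (Re (W s $ 2))^2 + (Im (W s $ 2))^2) t0 \<and>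
      (\<lambda>s. (Re (W s $ 1))^2 + (Im (W s $ 1))^2 + (Re (W s $ 2))^2 + (Im (W s $ 2))^2) t0
      \<le> (5/3) * exp (4 + (H t - H t0)) * (\<lambda>s. (Re (W s $ 1))^2 + (Im (W s $ 1))^2 + (Re (W s $ 2))^2 + (Im (W s $ 2))^2) t"
  proof (rule ode_real[where c = "bfun M" and q = "QQ M 1" and m = M and S = "tail_int (QQ M 1)" and Hd = Hd, OF t0(2) r])
    show "continuous_on {t0..t} (\<lambda>s. Re (W s $ 1))" "continuous_on {t0..t} (\<lambda>s. Im (W s $ 1))"
      "continuous_on {t0..t} (\<lambda>s. Re (W s $ 2))" "continuous_on {t0..t} (\<lambda>s. Im (W s $ 2))"
      using comp_cont[OF Wc'] by auto
    show "continuous_on {t0..t} (QQ M 1)" by (rule contq)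
    show "continuous_on {t0..t} (tail_int (QQ M 1))" by (rule contS)
    show "continuous_on {t0..t} H" by (rule contH)
  next
    fix x assume x: "t0 < x" "x < t"
    have x0: "x > 0" "x \<ge> T" using x t0 T0 by auto
    note dW = Wat[OF x(1)]
    show "((\<lambda>s. Re (W s $ 1)) has_real_derivative (-2 * bfun M x * Re (W x $ 1) - r * Im (W x $ 2))) (at x)"
      by (rule DERIV_cong[OF comp_deriv(1)[OF dW, of 1]]) (simp add: Amat_1)
    show "((\<lambda>s. Im (W s $ 1)) has_real_derivative (-2 * bfun M x * Im (W x $ 1) + r * Re (W x $ 2))) (at x)"
      using comp_deriv(2)[OF dW, of 1] by (simp add: Amat_1)
    show "((\<lambda>s. Re (W s $ 2)) has_real_derivative (- r * Im (W x $ 1))) (at x)"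
      using comp_deriv(1)[OF dW, of 2] by (simp add: Amat_2)
    show "((\<lambda>s. Im (W s $ 2)) has_real_derivative (r * Re (W x $ 1))) (at x)"
      using comp_deriv(2)[OF dW, of 2] by (simp add: Amat_2)
    show "(QQ M 1 has_real_derivative M x) (at x)" by (rule Q1_deriv[OF x0(1)])
    show "(tail_int (QQ M 1) has_real_derivative - QQ M 1 x) (at x)"
      by (rule tail_deriv[OF Q1_cont S_conv x0(1)])
    show "(H has_real_derivative Hd x) (at x)"
      unfolding H_def Hd_def using r
      by (auto intro!: derivative_eq_intros phi_deriv[OF x0(1)] dP[OF x0(1)])
    have bb: "\<bar>bfun M x - QQ M 1 x\<bar> \<le> 2 * u x" by (rule bfun_bound[OF x0(2)])
    have u0: "u x \<ge> 0" using u_nonneg x0 by simp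
    have mb: "\<bar>M x\<bar> / r \<le> C * Pd x / r" using MP[OF x0(1)] r by (simp add: divide_right_mono)
    have cp: "C * Pd x \<ge> 0" using MP[OF x0(1)] by linarith
    show "4 / 3 * (5 * \<bar>bfun M x - QQ M 1 x\<bar> + \<bar>M x\<bar> / r) \<le> Hd x"
    proof -
      have e: "2*C/r*Pd x = 2 * (C * Pd x / r)" by simp
      have "C * Pd x / r \<ge> 0" using cp r by simp
      then have "4/3 * (\<bar>M x\<bar> / r) \<le> 2*C/r*Pd x" unfolding e using mb by linarith
      then show ?thesis unfolding Hd_def using lin_aux bb u0 by blast
    qed
  next
    fix x assume x: "t0 \<le> x" "x \<le> t"
    show "\<bar>QQ M 1 x\<bar> \<le> r / 4" by (rule qb[OF x])
    show "\<bar>tail_int (QQ M 1) x\<bar> \<le> 1" using Sb x t0 by auto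
  qed
  have HK: "H t - H t0 \<le> 14/1296 + 2*C/r*(P t - P t0)"
  proof -
    have A: "phi M t0 \<le> 1/1296" by (rule Tphi'[OF t0(1)])
    have B: "phi M t \<ge> 0" using phi_nonneg t0 T0 by simp
    have eq: "H t - H t0 = 14 * (phi M t0 - phi M t) + 2*C/r*(P t - P t0)"
      unfolding H_def by (simp add: algebra_simps diff_divide_distrib)
    show ?thesis unfolding eq by (rule lin2[OF A B])
  qed
  have ex: "(5/3) * exp (4 + (H t - H t0)) \<le> (5/3) * exp (4 + (14/1296 + 2*C/r*(P t - P t0)))"
    using HK by simp
  have n2: "(norm (W s))^2 = (Re (W s $ 1))^2 + (Im (W s $ 1))^2 + (Re (W s $ 2))^2 + (Im (W s $ 2))^2" for s
    by (rule norm_vec2)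
  have e1: "(norm (W t))^2 \<le> (5/3) * exp (4 + (H t - H t0)) * (norm (W t0))^2"
    and e2: "(norm (W t0))^2 \<le> (5/3) * exp (4 + (H t - H t0)) * (norm (W t))^2"
    using est unfolding n2[symmetric] by auto
  show ?thesis
    using order_trans[OF e1 mult_right_mono[OF ex, of "(norm (W t0))^2"]]
      order_trans[OF e2 mult_right_mono[OF ex, of "(norm (W t))^2"]] by simp
qed

end

lemma dpow: "x > -1 \<Longrightarrow> ((\<lambda>s. (1 + s) powr e) has_real_derivative e * (1 + x) powr (e - 1)) (at x)"
  using DERIV_fun_powr[of "\<lambda>s. 1 + s" 1 x e] by (auto intro!: derivative_eq_intros)

lemma bound_aux:
  fixes A X Y Z r N \<delta> :: real
  assumes A: "0 \<le> A" and X: "X \<le> Y / \<delta>" and rz: "1 / r \<le> Z / N" and YZ: "Y * Z \<le> 1"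
    and r: "r > 0" and N: "N > 0" and d: "\<delta> > 0" and Y: "Y \<ge> 0"
  shows "2 * A / r * X \<le> 2 * A / (N * \<delta>)"
proof -
  have "2 * A / r * X \<le> 2 * A / r * (Y / \<delta>)"
    by (rule mult_left_mono[OF X]) (use A r in simp)
  also have "\<dots> = 2 * A * (Y / \<delta>) * (1 / r)" by simp
  also have "\<dots> \<le> 2 * A * (Y / \<delta>) * (Z / N)"
    by (rule mult_left_mono[OF rz]) (use A Y d in simp)
  also have "\<dots> = 2 * A * (Y * Z) / (N * \<delta>)" by (simp add: field_simps)
  also have "\<dots> \<le> 2 * A * 1 / (N * \<delta>)"
    by (intro divide_right_mono mult_left_mono YZ) (use A N d in auto)
  finally show ?thesis by simp
qed

lemma inv_le: fixes r N Z :: real assumes "r > 0" "N > 0" "Z * r \<ge> N" shows "1 / r \<le> Z / N"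
  using assms by (simp add: field_simps)

lemma sq_to_norm:
  fixes a b c :: real assumes "a \<ge> 0" "b \<ge> 0" "c > 0" "a^2 \<le> c * b^2"
  shows "a \<le> sqrt c * b"
proof -
  have "sqrt (a^2) \<le> sqrt (c * b^2)" using assms(4) by (rule real_sqrt_le_mono)
  then show ?thesis using assms by (simp add: real_sqrt_mult)
qed

theorem proposition1:
  fixes M :: "real \<Rightarrow> real" and \<alpha> \<beta> \<gamma> T :: real
    and W :: "real \<Rightarrow> real^'n \<Rightarrow> complex^2"
  assumes Mcont: "continuous_on {0..} M"
    and par: "\<alpha> \<le> 1" "\<beta> < 1" "\<gamma> > 0"
    and par_ne: "\<alpha> \<noteq> 0 \<Longrightarrow> \<gamma> \<ge> \<beta> \<and> \<beta> \<ge> (\<alpha> + 1) / 2"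
    and par_0: "\<alpha> = 0 \<Longrightarrow> \<gamma> \<ge> \<beta> \<and> \<beta> > 1 / 2"
    and conv1: "\<forall>t\<ge>0. tail_conv M t"
    and conv2: "\<forall>t\<ge>0. tail_conv (tail_int M) t"
    and conv3: "\<forall>t\<ge>0. tail_conv (\<lambda>s. (tail_int M s)\<^sup>2) t"
    and conv4: "\<forall>t\<ge>0. tail_conv (\<lambda>s. tail_int (\<lambda>\<sigma>. (tail_int M \<sigma>)\<^sup>2) s) t"
    and conv5: "\<alpha> \<le> 0 \<Longrightarrow> \<forall>t\<ge>0. tail_conv (\<lambda>s. \<bar>tail_int (tail_int M) s\<bar>) t"
    and M1a: "\<alpha> \<ge> 0 \<Longrightarrow> \<exists>C. \<forall>t\<ge>0.
               integral {0..t} (\<lambda>s. \<bar>tail_int (tail_int M) s\<bar>) \<le> C * (1 + t) powr \<alpha>"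
    and M1b: "\<alpha> \<le> 0 \<Longrightarrow> \<exists>C. \<forall>t\<ge>0.
               tail_int (\<lambda>s. \<bar>tail_int (tail_int M) s\<bar>) t \<le> C * (1 + t) powr \<alpha>"
    and M2: "\<exists>C. \<forall>t\<ge>0. \<bar>M t\<bar> \<le> C * (1 + t) powr (- 2 * \<beta>)"
    and M3a: "\<exists>C. \<forall>t\<ge>0. \<bar>tail_int M t\<bar> \<le> C * (1 + t) powr (- \<gamma>)"
    and M3b: "\<exists>C. \<forall>t\<ge>0. tail_int (\<lambda>s. (tail_int M s)\<^sup>2) t \<le> C * (1 + t) powr (- \<gamma>)"
    and M3c: "tail_conv (\<lambda>t. tail_int (\<lambda>s. (tail_int M s)\<^sup>2) t) 0"
    and extra: "\<exists>C. \<forall>t\<ge>0. (1 + t) powr \<alpha> *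
               tail_int (\<lambda>s. tail_int (\<lambda>\<sigma>. (tail_int M \<sigma>)\<^sup>2) s) t \<le> C"
    and T: "T > 0" "\<forall>t\<ge>T. \<bar>tail_int (QQ M 1) t\<bar> \<le> 1 \<and> phi M t \<le> 6 powr (-4)"
    and W: "\<forall>\<xi>. \<forall>t\<ge>T. ((\<lambda>s. W s \<xi>) has_vector_derivative
                 (Amat (bfun M t) (norm \<xi>) *v W t \<xi>)) (at t within {T..})"
  shows "\<exists>N>0. \<exists>K\<^sub>1>0. \<forall>t \<xi>. (t, \<xi>) \<in> ZH T \<alpha> N \<and> \<xi> \<noteq> 0 \<longrightarrow>
           (\<alpha> > 0 \<longrightarrow> inverse K\<^sub>1 * norm (W (t_xi T \<alpha> N \<xi>) \<xi>) \<le> norm (W t \<xi>)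
                      \<and> norm (W t \<xi>) \<le> K\<^sub>1 * norm (W (t_xi T \<alpha> N \<xi>) \<xi>)) \<and>
           (\<alpha> \<le> 0 \<longrightarrow> inverse K\<^sub>1 * norm (W T \<xi>) \<le> norm (W t \<xi>)
                      \<and> norm (W t \<xi>) \<le> K\<^sub>1 * norm (W T \<xi>))"
proof -
  obtain C2 where C2: "\<forall>t\<ge>0. \<bar>M t\<bar> \<le> C2 * (1 + t) powr (- 2 * \<beta>)" using M2 by blast
  obtain C3 where C3: "\<forall>t\<ge>0. \<bar>tail_int M t\<bar> \<le> C3 * (1 + t) powr (- \<gamma>)" using M3a by blast
  define C2' where "C2' = max C2 0"
  define C3' where "C3' = max C3 0"
  have C2'0: "C2' \<ge> 0" and C3'0: "C3' \<ge> 0" unfolding C2'_def C3'_def by auto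
  interpret R: rsetup M T
    by unfold_locales (use Mcont conv1 conv2 conv3 conv4 T in auto)
  have Sb: "\<forall>s\<ge>T. \<bar>tail_int (QQ M 1) s\<bar> \<le> 1" using T(2) by auto
  have ga: "\<alpha> \<le> \<gamma>"
  proof (cases "\<alpha> = 0")
    case True then show ?thesis using par by simp
  next
    case False show ?thesis using conjunct1[OF par_ne[OF False]] conjunct2[OF par_ne[OF False]] par(1) by argo
  qed
  have b2: "\<alpha> + 1 \<le> 2 * \<beta>"
  proof (cases "\<alpha> = 0")
    case True then show ?thesis using par_0 by simp
  next
    case False show ?thesis using conjunct2[OF par_ne[OF False]] by argo
  qed
  have b1: "\<alpha> \<ge> 0 \<Longrightarrow> 2 * \<beta> > 1"
  proof -
    assume "\<alpha> \<ge> 0"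
    then show ?thesis using par_0 b2 by (cases "\<alpha> = 0") auto
  qed
  define N where "N = 4 * C3' + 1"
  have N0: "N > 0" unfolding N_def using C3'0 by simp
  define \<delta> where "\<delta> = (if \<alpha> \<ge> 0 then 2 * \<beta> - 1 else - \<alpha>)"
  have d0: "\<delta> > 0" unfolding \<delta>_def using b1 by auto
  define P where "P = (\<lambda>s. if \<alpha> \<ge> 0 then - ((1 + s) powr (1 - 2 * \<beta>)) / (2 * \<beta> - 1)
                           else (1 + s) powr (- \<alpha>) / (- \<alpha>))"
  define Pd where "Pd = (\<lambda>s. if \<alpha> \<ge> 0 then (1 + s) powr (- 2 * \<beta>) else (1 + s) powr (- \<alpha> - 1))"
  have dP: "(P has_real_derivative Pd x) (at x)" if x: "x > 0" for x
  proof (cases "\<alpha> \<ge> 0")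
    case True
    have "((\<lambda>s. - ((1 + s) powr (1 - 2 * \<beta>)) / (2 * \<beta> - 1)) has_real_derivative
        - ((1 - 2 * \<beta>) * (1 + x) powr (1 - 2 * \<beta> - 1)) / (2 * \<beta> - 1)) (at x)"
      by (rule DERIV_cdivide[OF DERIV_minus[OF dpow]]) (use x in simp)
    moreover have "- ((1 - 2 * \<beta>) * (1 + x) powr (1 - 2 * \<beta> - 1)) / (2 * \<beta> - 1) = (1 + x) powr (- 2 * \<beta>)"
      using b1[OF True] by (simp add: field_simps)
    ultimately show ?thesis unfolding P_def Pd_def using True by simp
  next
    case False
    have "((\<lambda>s. (1 + s) powr (- \<alpha>) / (- \<alpha>)) has_real_derivative
        ((- \<alpha>) * (1 + x) powr (- \<alpha> - 1)) / (- \<alpha>)) (at x)"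
      by (rule DERIV_cdivide[OF dpow]) (use x in simp)
    moreover have "((- \<alpha>) * (1 + x) powr (- \<alpha> - 1)) / (- \<alpha>) = (1 + x) powr (- \<alpha> - 1)"
      using False by simp
    ultimately show ?thesis unfolding P_def Pd_def using False by simp
  qed
  have MP: "\<bar>M x\<bar> \<le> C2' * Pd x" if x: "x > 0" for x
  proof -
    have "\<bar>M x\<bar> \<le> C2 * (1 + x) powr (- 2 * \<beta>)" using C2 x by simp
    also have "\<dots> \<le> C2' * (1 + x) powr (- 2 * \<beta>)" unfolding C2'_def by (intro mult_right_mono) auto
    also have "\<dots> \<le> C2' * Pd x"
    proof (cases "\<alpha> \<ge> 0")
      case True then show ?thesis unfolding Pd_def by simp
    next
      case False
      have "(1 + x) powr (- 2 * \<beta>) \<le> (1 + x) powr (- \<alpha> - 1)"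
        by (rule powr_mono) (use b2 x in auto)
      then show ?thesis unfolding Pd_def using False C2'0 by (simp add: mult_left_mono)
    qed
    finally show ?thesis .
  qed
  define K0 where "K0 = 14/1296 + 2 * C2' / (N * \<delta>)"
  define K1 where "K1 = sqrt ((5/3) * exp (4 + K0))"
  have K1: "K1 > 0" unfolding K1_def by simp
  have K1sq: "K1^2 = (5/3) * exp (4 + K0)" unfolding K1_def by simp
  show ?thesis
  proof (rule exI[of _ N], rule conjI[OF N0], rule exI[of _ K1], rule conjI[OF K1], intro allI impI)
    fix t :: real and \<xi> :: "real^'n"
    assume tx: "(t, \<xi>) \<in> ZH T \<alpha> N \<and> \<xi> \<noteq> 0"
    define r where "r = norm \<xi>"
    have r0: "r > 0" using tx unfolding r_def by simp
    have tT: "t \<ge> T" and tN: "(1 + t) powr \<alpha> * r \<ge> N" using tx unfolding ZH_def r_def by auto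
    define t0 where "t0 = (if \<alpha> > 0 then t_xi T \<alpha> N \<xi> else T)"
    have T0: "T > 0" using T by simp
    have t0T: "T \<le> t0" unfolding t0_def t_xi_def by auto
    have t0t: "t0 \<le> t"
    proof (cases "\<alpha> > 0")
      case True
      have "N / r \<le> (1 + t) powr \<alpha>" using tN r0 by (simp add: field_simps)
      then have "(N / r) powr (1 / \<alpha>) \<le> ((1 + t) powr \<alpha>) powr (1 / \<alpha>)"
        by (intro powr_mono2) (use True N0 r0 in auto)
      also have "\<dots> = 1 + t" using True tT T0 by (simp add: powr_powr)
      finally show ?thesis unfolding t0_def t_xi_def r_def using True tT by simp
    next
      case False then show ?thesis unfolding t0_def using tT by simp
    qed
    have sN: "(1 + s) powr \<alpha> * r \<ge> N" if s: "t0 \<le> s" "s \<le> t" for s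
    proof -
      have s0: "s > 0" using s t0T T0 by simp
      consider "\<alpha> > 0" | "\<alpha> = 0" | "\<alpha> < 0" by linarith
      then show ?thesis
      proof cases
        case 1
        have "(N / r) powr (1 / \<alpha>) - 1 \<le> t0" unfolding t0_def t_xi_def r_def using 1 by simp
        then have "(N / r) powr (1 / \<alpha>) \<le> 1 + s" using s by simp
        then have "((N / r) powr (1 / \<alpha>)) powr \<alpha> \<le> (1 + s) powr \<alpha>"
          by (intro powr_mono2) (use 1 in auto)
        moreover have "((N / r) powr (1 / \<alpha>)) powr \<alpha> = N / r" using 1 N0 r0 by (simp add: powr_powr)
        ultimately have "N / r \<le> (1 + s) powr \<alpha>" by simp
        then show ?thesis using r0 by (simp add: field_simps)
      next
        case 2 then show ?thesis using tN s0 tT T0 by simp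
      next
        case 3
        have "(1 + t) powr \<alpha> \<le> (1 + s) powr \<alpha>"
          by (rule powr_mono2') (use 3 s s0 in auto)
        then have "(1 + t) powr \<alpha> * r \<le> (1 + s) powr \<alpha> * r" using r0 by (simp add: mult_right_mono)
        then show ?thesis using tN by linarith
      qed
    qed
    have qb: "\<bar>QQ M 1 s\<bar> \<le> r / 4" if s: "t0 \<le> s" "s \<le> t" for s
    proof -
      have s0: "s > 0" using s t0T T0 by simp
      have pos: "(1 + s) powr \<alpha> > 0" using s0 by simp
      have "\<bar>QQ M 1 s\<bar> = \<bar>tail_int M s\<bar>" by (simp add: R.Q1_eq[unfolded One_nat_def])
      also have "\<dots> \<le> C3 * (1 + s) powr (- \<gamma>)" using C3 s0 by simp
      also have "\<dots> \<le> C3' * (1 + s) powr (- \<gamma>)" unfolding C3'_def by (intro mult_right_mono) auto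
      also have "\<dots> \<le> C3' * (1 + s) powr (- \<alpha>)"
        by (intro mult_left_mono powr_mono) (use ga s0 C3'0 in auto)
      also have "(1 + s) powr (- \<alpha>) = 1 / (1 + s) powr \<alpha>" by (simp add: powr_minus divide_inverse)
      also have h: "1 / (1 + s) powr \<alpha> \<le> r / N"
        using sN[OF s] pos r0 N0 by (simp add: field_simps)
      have "C3' * (1 / (1 + s) powr \<alpha>) \<le> C3' * (r / N)" by (rule mult_left_mono[OF h C3'0])
      also have "C3' * (r / N) \<le> r / 4"
      proof -
        have "4 * C3' \<le> N" unfolding N_def by simp
        then have "C3' / N \<le> 1/4" using N0 by (simp add: field_simps)
        then have "r * (C3' / N) \<le> r * (1/4)" using r0 by (intro mult_left_mono) auto
        then show ?thesis by (simp add: mult.commute)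
      qed
      finally show ?thesis .
    qed
    have Wx: "\<forall>s\<ge>T. ((\<lambda>s. W s \<xi>) has_vector_derivative (Amat (bfun M s) r *v W s \<xi>)) (at s within {T..})"
      using W unfolding r_def by blast
    note est = R.main_est[OF Wx r0 t0T t0t qb Sb dP MP C2'0]
    have t00: "t0 > 0" using t0T T0 by simp
    have PB: "2 * C2' / r * (P t - P t0) \<le> 2 * C2' / (N * \<delta>)"
    proof (cases "\<alpha> \<ge> 0")
      case True
      define Y where "Y = (1 + t0) powr (1 - 2 * \<beta>)"
      define Z where "Z = (1 + t0) powr \<alpha>"
      have "P t - P t0 = (Y - (1 + t) powr (1 - 2 * \<beta>)) / \<delta>"
        unfolding P_def Y_def \<delta>_def using True by (simp add: diff_divide_distrib)
      also have "\<dots> \<le> Y / \<delta>" by (rule divide_right_mono) (use d0 in auto)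
      finally have X: "P t - P t0 \<le> Y / \<delta>" .
      have rz: "1 / r \<le> Z / N" unfolding Z_def by (rule inv_le[OF r0 N0 sN]) (use t0t in auto)
      have "Y * Z = (1 + t0) powr (1 - 2 * \<beta> + \<alpha>)" unfolding Y_def Z_def by (simp add: powr_add)
      also have "\<dots> \<le> (1 + t0) powr 0" by (rule powr_mono) (use b2 t00 in auto)
      finally have YZ: "Y * Z \<le> 1" using t00 by simp
      show ?thesis by (rule bound_aux[OF C2'0 X rz YZ r0 N0 d0]) (simp add: Y_def)
    next
      case False
      define Y where "Y = (1 + t) powr (- \<alpha>)"
      define Z where "Z = (1 + t) powr \<alpha>"
      have "P t - P t0 = (Y - (1 + t0) powr (- \<alpha>)) / \<delta>"
        unfolding P_def Y_def \<delta>_def using False by (simp add: diff_divide_distrib)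
      also have "\<dots> \<le> Y / \<delta>" by (rule divide_right_mono) (use d0 in auto)
      finally have X: "P t - P t0 \<le> Y / \<delta>" .
      have rz: "1 / r \<le> Z / N" unfolding Z_def by (rule inv_le[OF r0 N0 sN]) (use t0t in auto)
      have "Y * Z = 1" unfolding Y_def Z_def powr_add[symmetric] using t00 t0t by simp
      then have YZ: "Y * Z \<le> 1" by simp
      show ?thesis by (rule bound_aux[OF C2'0 X rz YZ r0 N0 d0]) (simp add: Y_def)
    qed
    have cK: "(5/3) * exp (4 + (14/1296 + 2 * C2' / r * (P t - P t0))) \<le> K1^2"
      unfolding K1sq K0_def using PB by simp
    have n1: "(norm (W t \<xi>))^2 \<le> K1^2 * (norm (W t0 \<xi>))^2"
      using order_trans[OF conjunct1[OF est] mult_right_mono[OF cK]] by simp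
    have n2: "(norm (W t0 \<xi>))^2 \<le> K1^2 * (norm (W t \<xi>))^2"
      using order_trans[OF conjunct2[OF est] mult_right_mono[OF cK]] by simp
    have up: "norm (W t \<xi>) \<le> K1 * norm (W t0 \<xi>)"
      using sq_to_norm[OF norm_ge_zero norm_ge_zero _ n1] K1 by simp
    have lo0: "norm (W t0 \<xi>) \<le> K1 * norm (W t \<xi>)"
      using sq_to_norm[OF norm_ge_zero norm_ge_zero _ n2] K1 by simp
    have lo: "inverse K1 * norm (W t0 \<xi>) \<le> norm (W t \<xi>)"
      using lo0 K1 by (simp add: field_simps)
    show "(\<alpha> > 0 \<longrightarrow> inverse K1 * norm (W (t_xi T \<alpha> N \<xi>) \<xi>) \<le> norm (W t \<xi>)
                      \<and> norm (W t \<xi>) \<le> K1 * norm (W (t_xi T \<alpha> N \<xi>) \<xi>)) \<and>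
           (\<alpha> \<le> 0 \<longrightarrow> inverse K1 * norm (W T \<xi>) \<le> norm (W t \<xi>)
                      \<and> norm (W t \<xi>) \<le> K1 * norm (W T \<xi>))"
      using up lo unfolding t0_def by auto
  qed
qed

end
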